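(* Consider the optimization problem (P) defined in the context. There exists an optimal solution $(\boldsymbol\tau,\boldsymbol\varphi,\mathbf e)$ of (P) in which the source node uses all of its harvested energy, i.e. $e_1=\zeta P_t h_1\tau_0$.
   Context: Parameters: integer $K\ge1$, $T>0$, $W>0$, $\zeta\in(0,1]$, $P_t>0$, $I_p>0$, and for $k=1,\dots,K$: $h_k>0$, $f_k>0$, $\gamma_k>0$, $B_k^b>0$. Variables: $\boldsymbol\tau=(\tau_0,\tau_1,\dots,\tau_K)$, $\boldsymbol\varphi=(\varphi_1,\dots,\varphi_K)$, $\mathbf e=(e_1,\dots,e_K)$. Rate of node $k$: $R_k(\tau_k,\varphi_k,e_k)=\varphi_k W\log_2(1+\frac{e_k}{\varphi_k}\gamma_k)+(\tau_k-\varphi_k)B_k^b$ if $\varphi_k>0$, and $R_k=\tau_kB_k^b$ if $\varphi_k=0$. Problem (P): maximize $R(\boldsymbol\tau,\boldsymbol\varphi,\mathbf e)=\min_{1\le k\le K}R_k(\tau_k,\varphi_k,e_k)$ subject to: $\sum_{k=0}^K\tau_k\le T$; $0\le\tau_0$; $0\le\varphi_k\le\tau_k\le T$ for $k=1,\dots,K$; $0\le e_k\le \zeta P_t h_k\sum_{i=0}^{k-1}\tau_i$ for $k=1,\dots,K$ (harvested-energy constraint); $e_k\le \frac{I_p}{f_k}\varphi_k$ for $k=1,\dots,K$ (interference constraint). *)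

theory Defs
  imports Complex_Main
begin

definition node_rate :: "real \<Rightarrow> real \<Rightarrow> real \<Rightarrow> real \<Rightarrow> real \<Rightarrow> real \<Rightarrow> real" where
  "node_rate W \<gamma> Bb \<tau>k \<phi>k ek =
     (if \<phi>k > 0 then \<phi>k * W * log 2 (1 + (ek / \<phi>k) * \<gamma>) + (\<tau>k - \<phi>k) * Bb
      else \<tau>k * Bb)"

definition objR :: "nat \<Rightarrow> real \<Rightarrow> (nat \<Rightarrow> real) \<Rightarrow> (nat \<Rightarrow> real)
     \<Rightarrow> (nat \<Rightarrow> real) \<Rightarrow> (nat \<Rightarrow> real) \<Rightarrow> (nat \<Rightarrow> real) \<Rightarrow> real" where
  "objR K W \<gamma> Bb \<tau> \<phi> e = Min ((\<lambda>k. node_rate W (\<gamma> k) (Bb k) (\<tau> k) (\<phi> k) (e k)) ` {1..K})"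

text \<open>Feasible set of problem (P); tau indexed by 0..K, phi and e by 1..K.\<close>
definition feasibleP :: "nat \<Rightarrow> real \<Rightarrow> real \<Rightarrow> real \<Rightarrow> real \<Rightarrow> (nat \<Rightarrow> real) \<Rightarrow> (nat \<Rightarrow> real)
     \<Rightarrow> (nat \<Rightarrow> real) \<Rightarrow> (nat \<Rightarrow> real) \<Rightarrow> (nat \<Rightarrow> real) \<Rightarrow> bool" where
  "feasibleP K T \<zeta> Pt Ip h f \<tau> \<phi> e \<longleftrightarrow>
     (\<Sum>k=0..K. \<tau> k) \<le> T \<and> 0 \<le> \<tau> 0 \<and>
     (\<forall>k\<in>{1..K}. 0 \<le> \<phi> k \<and> \<phi> k \<le> \<tau> k \<and> \<tau> k \<le> T \<and>
        0 \<le> e k \<and> e k \<le> \<zeta> * Pt * h k * (\<Sum>i=0..k-1. \<tau> i) \<and>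
        e k \<le> (Ip / f k) * \<phi> k)"

end

theory Submission
  imports Defs "HOL-Analysis.Analysis"
begin

lemma subseq_multi:
  fixes f :: "nat \<Rightarrow> nat \<Rightarrow> 'a::heine_borel"
  assumes "\<And>i. bounded (range (\<lambda>n. f n i))"
  shows "\<exists>r l. strict_mono r \<and> (\<forall>i<N. ((\<lambda>n. f (r n) i) \<longlongrightarrow> l i) sequentially)"
proof (induction N)
  case 0
  show ?case by (rule exI[of _ id]) (auto simp: strict_mono_def)
next
  case (Suc N)
  then obtain r l where r: "strict_mono r" and l: "\<forall>i<N. ((\<lambda>n. f (r n) i) \<longlongrightarrow> l i) sequentially"
    by blast
  have "bounded (range (\<lambda>n. f (r n) N))"
    by (rule bounded_subset[OF assms[of N]]) auto
  then obtain l' s where s: "strict_mono s" and l': "((\<lambda>n. f (r n) N) \<circ> s) \<longlonglongrightarrow> l'"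
    using bounded_imp_convergent_subsequence by blast
  have "strict_mono (r \<circ> s)" using r s by (simp add: strict_mono_o)
  moreover have "\<forall>i<Suc N. ((\<lambda>n. f ((r \<circ> s) n) i) \<longlongrightarrow> (l(N := l')) i) sequentially"
  proof (intro allI impI)
    fix i assume "i < Suc N"
    show "((\<lambda>n. f ((r \<circ> s) n) i) \<longlongrightarrow> (l(N := l')) i) sequentially"
    proof (cases "i = N")
      case True then show ?thesis using l' by (simp add: o_def)
    next
      case False
      then have "i < N" using \<open>i < Suc N\<close> by simp
      then have "((\<lambda>n. f (r n) i) \<circ> s) \<longlonglongrightarrow> l i" using l s LIMSEQ_subseq_LIMSEQ by blast
      then show ?thesis using False by (simp add: o_def)
    qed
  qed
  ultimately show ?case by blast
qed

lemma tau_nonneg: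
  assumes "feasibleP K T \<zeta> Pt Ip h f \<tau> \<phi> e" "i \<le> K" shows "0 \<le> \<tau> i"
proof (cases "i = 0")
  case True then show ?thesis using assms unfolding feasibleP_def by auto
next
  case False
  then have "i \<in> {1..K}" using assms by auto
  then have "0 \<le> \<phi> i \<and> \<phi> i \<le> \<tau> i" using assms(1) unfolding feasibleP_def by blast
  then show ?thesis by linarith
qed

lemma psum_le:
  assumes "feasibleP K T \<zeta> Pt Ip h f \<tau> \<phi> e" "m \<le> K" shows "(\<Sum>i=0..m. \<tau> i) \<le> T"
proof -
  have "(\<Sum>i=0..m. \<tau> i) \<le> (\<Sum>i=0..K. \<tau> i)"
    by (rule sum_mono2) (use assms in \<open>auto intro: tau_nonneg\<close>)
  also have "\<dots> \<le> T" using assms unfolding feasibleP_def by auto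
  finally show ?thesis .
qed

lemma rate_bound:
  assumes "0 \<le> p" "0 \<le> e" "e \<le> c * p" "W > 0" "\<gamma> > 0" "Bb > 0"
  shows "node_rate W \<gamma> Bb t p e \<le> p * W * log 2 (1 + c * \<gamma>) + t * Bb"
proof (cases "p > 0")
  case True
  have "e / p \<le> c" using True assms by (simp add: divide_le_eq mult.commute)
  then have "e / p * \<gamma> \<le> c * \<gamma>" using assms by (intro mult_right_mono) auto
  moreover have "0 \<le> e / p * \<gamma>" using assms True by simp
  ultimately have "log 2 (1 + e / p * \<gamma>) \<le> log 2 (1 + c * \<gamma>)" by simp
  then have "p * W * log 2 (1 + e / p * \<gamma>) \<le> p * W * log 2 (1 + c * \<gamma>)"
    using True assms by (simp add: mult_left_mono)
  moreover have "(t - p) * Bb \<le> t * Bb" using assms True by (simp add: algebra_simps)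
  moreover have "node_rate W \<gamma> Bb t p e = p * W * log 2 (1 + e / p * \<gamma>) + (t - p) * Bb"
    using True unfolding node_rate_def by simp
  ultimately show ?thesis by linarith
next
  case False
  then have "p = 0" using assms by simp
  then show ?thesis unfolding node_rate_def by simp
qed

lemma rate_usc:
  fixes t p e m :: "nat \<Rightarrow> real"
  assumes t: "t \<longlonglongrightarrow> t0" and p: "p \<longlonglongrightarrow> p0" and e: "e \<longlonglongrightarrow> e0"
    and pn: "\<forall>n. 0 \<le> p n" and en: "\<forall>n. 0 \<le> e n" and ec: "\<forall>n. e n \<le> c * p n"
    and W: "W > 0" and g: "\<gamma> > 0" and B: "Bb > 0"
    and mn: "\<forall>n. m n \<le> node_rate W \<gamma> Bb (t n) (p n) (e n)" and m: "m \<longlonglongrightarrow> M"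
  shows "M \<le> node_rate W \<gamma> Bb t0 p0 e0"
proof -
  have p0: "0 \<le> p0" using p pn by (intro LIMSEQ_le_const) auto
  have e0: "0 \<le> e0" using e en by (intro LIMSEQ_le_const) auto
  show ?thesis
  proof (cases "p0 > 0")
    case True
    have ev: "eventually (\<lambda>n. 0 < p n) sequentially" using order_tendstoD(1)[OF p True] .
    have pos: "0 < 1 + e0 / p0 * \<gamma>" using True e0 g by (simp add: add_pos_nonneg)
    have lim: "((\<lambda>n. p n * W * log 2 (1 + e n / p n * \<gamma>) + (t n - p n) * Bb) \<longlongrightarrow>
          p0 * W * log 2 (1 + e0 / p0 * \<gamma>) + (t0 - p0) * Bb) sequentially"
      using True pos by (intro tendsto_intros t p e) auto
    have "M \<le> p0 * W * log 2 (1 + e0 / p0 * \<gamma>) + (t0 - p0) * Bb"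
    proof (rule tendsto_le[OF trivial_limit_sequentially lim m])
      show "eventually (\<lambda>n. m n \<le> p n * W * log 2 (1 + e n / p n * \<gamma>) + (t n - p n) * Bb) sequentially"
        using ev proof eventually_elim
        case (elim n) then show ?case using mn[rule_format, of n] by (simp add: node_rate_def)
      qed
    qed
    then show ?thesis using True by (simp add: node_rate_def)
  next
    case False
    then have "p0 = 0" using p0 by simp
    have lim: "((\<lambda>n. p n * W * log 2 (1 + c * \<gamma>) + t n * Bb) \<longlongrightarrow>
          p0 * W * log 2 (1 + c * \<gamma>) + t0 * Bb) sequentially"
      by (intro tendsto_intros t p)
    have "M \<le> p0 * W * log 2 (1 + c * \<gamma>) + t0 * Bb"
    proof (rule tendsto_le[OF trivial_limit_sequentially lim m])
      show "eventually (\<lambda>n. m n \<le> p n * W * log 2 (1 + c * \<gamma>) + t n * Bb) sequentially"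
        using mn rate_bound[OF _ _ _ W g B] pn en ec order_trans by (intro always_eventually) blast
    qed
    then show ?thesis using \<open>p0 = 0\<close> by (simp add: node_rate_def)
  qed
qed

lemma limit_feasible:
  assumes F: "\<forall>n. feasibleP K T \<zeta> Pt Ip h f (ts n) (ps n) (es n)"
    and lt: "\<forall>i\<le>K. (\<lambda>n. ts n i) \<longlonglongrightarrow> \<tau> i"
    and lp: "\<forall>i\<le>K. (\<lambda>n. ps n i) \<longlonglongrightarrow> \<phi> i"
    and le: "\<forall>i\<le>K. (\<lambda>n. es n i) \<longlonglongrightarrow> e i"
  shows "feasibleP K T \<zeta> Pt Ip h f \<tau> \<phi> e"
proof -
  have sl: "(\<lambda>n. \<Sum>i=0..m. ts n i) \<longlonglongrightarrow> (\<Sum>i=0..m. \<tau> i)" if "m \<le> K" for m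
    using lt that by (intro tendsto_sum) auto
  have F': "\<And>n. (\<Sum>k=0..K. ts n k) \<le> T \<and> 0 \<le> ts n 0 \<and>
     (\<forall>k\<in>{1..K}. 0 \<le> ps n k \<and> ps n k \<le> ts n k \<and> ts n k \<le> T \<and>
        0 \<le> es n k \<and> es n k \<le> \<zeta> * Pt * h k * (\<Sum>i=0..k-1. ts n i) \<and>
        es n k \<le> (Ip / f k) * ps n k)"
    using F unfolding feasibleP_def by blast
  show ?thesis unfolding feasibleP_def
  proof (intro conjI ballI)
    show "(\<Sum>k=0..K. \<tau> k) \<le> T" using F' by (intro LIMSEQ_le_const2[OF sl]) auto
    have "(\<lambda>n. ts n 0) \<longlonglongrightarrow> \<tau> 0" using lt by simp
    then show "0 \<le> \<tau> 0" using F' by (intro LIMSEQ_le_const) auto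
  next
    fix k assume k: "k \<in> {1..K}"
    then have kK: "k \<le> K" by simp
    have F'': "\<And>n. 0 \<le> ps n k \<and> ps n k \<le> ts n k \<and> ts n k \<le> T \<and>
        0 \<le> es n k \<and> es n k \<le> \<zeta> * Pt * h k * (\<Sum>i=0..k-1. ts n i) \<and>
        es n k \<le> (Ip / f k) * ps n k" using F' k by blast
    have t: "(\<lambda>n. ts n k) \<longlonglongrightarrow> \<tau> k" and p: "(\<lambda>n. ps n k) \<longlonglongrightarrow> \<phi> k"
      and ee: "(\<lambda>n. es n k) \<longlonglongrightarrow> e k" using lt lp le kK by auto
    have s: "(\<lambda>n. \<zeta> * Pt * h k * (\<Sum>i=0..k-1. ts n i)) \<longlonglongrightarrow> \<zeta> * Pt * h k * (\<Sum>i=0..k-1. \<tau> i)"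
      using kK by (intro tendsto_mult_left sl) auto
    have pp: "(\<lambda>n. (Ip / f k) * ps n k) \<longlonglongrightarrow> (Ip / f k) * \<phi> k"
      by (intro tendsto_mult_left p)
    show "0 \<le> \<phi> k" using F'' by (intro LIMSEQ_le_const[OF p]) auto
    show "\<phi> k \<le> \<tau> k" using F'' by (intro LIMSEQ_le[OF p t]) auto
    show "\<tau> k \<le> T" using F'' by (intro LIMSEQ_le_const2[OF t]) auto
    show "0 \<le> e k" using F'' by (intro LIMSEQ_le_const[OF ee]) auto
    show "e k \<le> \<zeta> * Pt * h k * (\<Sum>i=0..k-1. \<tau> i)" using F'' by (intro LIMSEQ_le[OF ee s]) auto
    show "e k \<le> (Ip / f k) * \<phi> k" using F'' by (intro LIMSEQ_le[OF ee pp]) auto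
  qed
qed

lemma sum_shift:
  fixes \<tau> :: "nat \<Rightarrow> real"
  shows "1 \<le> m \<Longrightarrow> (\<Sum>i=0..m. (\<tau>(0 := a, 1 := \<tau> 1 + \<tau> 0 - a)) i) = (\<Sum>i=0..m. \<tau> i)"
proof (induction m)
  case 0 then show ?case by simp
next
  case (Suc m)
  show ?case
  proof (cases "m = 0")
    case True then show ?thesis by simp
  next
    case False
    then show ?thesis using Suc by (simp add: sum.atLeast0_atMost_Suc)
  qed
qed

lemma rate_mono_tau:
  assumes "t \<le> t'" "0 \<le> Bb"
  shows "node_rate W \<gamma> Bb t p e \<le> node_rate W \<gamma> Bb t' p e"
  using assms mult_right_mono[OF assms] mult_right_mono[of "t - p" "t' - p" Bb] unfolding node_rate_def by auto

lemma objR_mono: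
  assumes "K \<ge> 1"
    and "\<forall>k\<in>{1..K}. node_rate W (\<gamma> k) (Bb k) (\<tau> k) (\<phi> k) (e k) \<le> node_rate W (\<gamma> k) (Bb k) (\<tau>' k) (\<phi> k) (e k)"
  shows "objR K W \<gamma> Bb \<tau> \<phi> e \<le> objR K W \<gamma> Bb \<tau>' \<phi> e"
proof -
  have ne: "{1..K} \<noteq> {}" using assms by simp
  show ?thesis unfolding objR_def
  proof (rule Min.boundedI, simp, use assms(1) in simp)
    fix y assume "y \<in> (\<lambda>k. node_rate W (\<gamma> k) (Bb k) (\<tau>' k) (\<phi> k) (e k)) ` {1..K}"
    then obtain k where k: "k \<in> {1..K}" and y: "y = node_rate W (\<gamma> k) (Bb k) (\<tau>' k) (\<phi> k) (e k)" by auto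
    have "Min ((\<lambda>k. node_rate W (\<gamma> k) (Bb k) (\<tau> k) (\<phi> k) (e k)) ` {1..K})
        \<le> node_rate W (\<gamma> k) (Bb k) (\<tau> k) (\<phi> k) (e k)" using k by (intro Min_le) auto
    then show "Min ((\<lambda>k. node_rate W (\<gamma> k) (Bb k) (\<tau> k) (\<phi> k) (e k)) ` {1..K}) \<le> y"
    proof -
      have "node_rate W (\<gamma> k) (Bb k) (\<tau> k) (\<phi> k) (e k) \<le> y" using assms(2) k y by blast
      then show ?thesis using \<open>Min _ \<le> _\<close> by linarith
    qed
  qed
qed

lemma adjust:
  assumes feas: "feasibleP K T \<zeta> Pt Ip h f \<tau> \<phi> e" and K: "K \<ge> 1"
    and c: "\<zeta> * Pt * h 1 > 0" and B: "Bb 1 > 0"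
  defines "a \<equiv> e 1 / (\<zeta> * Pt * h 1)"
  defines "\<tau>' \<equiv> \<tau>(0 := a, 1 := \<tau> 1 + \<tau> 0 - a)"
  shows "feasibleP K T \<zeta> Pt Ip h f \<tau>' \<phi> e \<and> objR K W \<gamma> Bb \<tau> \<phi> e \<le> objR K W \<gamma> Bb \<tau>' \<phi> e
         \<and> e 1 = \<zeta> * Pt * h 1 * \<tau>' 0"
proof -
  have F: "(\<Sum>k=0..K. \<tau> k) \<le> T \<and> 0 \<le> \<tau> 0 \<and>
     (\<forall>k\<in>{1..K}. 0 \<le> \<phi> k \<and> \<phi> k \<le> \<tau> k \<and> \<tau> k \<le> T \<and>
        0 \<le> e k \<and> e k \<le> \<zeta> * Pt * h k * (\<Sum>i=0..k-1. \<tau> i) \<and>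
        e k \<le> (Ip / f k) * \<phi> k)" using feas unfolding feasibleP_def by blast
  have "(1::nat) \<in> {1..K}" using K by simp
  then have "0 \<le> e 1 \<and> e 1 \<le> \<zeta> * Pt * h 1 * (\<Sum>i=0..1-1. \<tau> i)" using F by blast
  then have e1: "0 \<le> e 1 \<and> e 1 \<le> \<zeta> * Pt * h 1 * \<tau> 0" by simp
  have a0: "0 \<le> a" "a \<le> \<tau> 0" using e1 c unfolding a_def by (auto simp: divide_le_eq mult.commute)
  have "\<zeta> * Pt * h 1 \<noteq> 0" by (metis c order_less_irrefl)
  then have ea: "e 1 = \<zeta> * Pt * h 1 * a" unfolding a_def by simp
  have ss: "\<And>m. 1 \<le> m \<Longrightarrow> (\<Sum>i=0..m. \<tau>' i) = (\<Sum>i=0..m. \<tau> i)" unfolding \<tau>'_def by (rule sum_shift)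
  have t01: "\<tau> 0 + \<tau> 1 \<le> T"
  proof -
    have "\<tau> 0 + \<tau> 1 = (\<Sum>i=0..1. \<tau> i)" by simp
    also have "\<dots> \<le> T" using psum_le[OF feas K] .
    finally show ?thesis .
  qed
  have feas': "feasibleP K T \<zeta> Pt Ip h f \<tau>' \<phi> e" unfolding feasibleP_def
  proof (intro conjI ballI)
    show "(\<Sum>k=0..K. \<tau>' k) \<le> T" using ss[OF K] F by simp
    show "0 \<le> \<tau>' 0" using a0 unfolding \<tau>'_def by simp
  next
    fix k assume k: "k \<in> {1..K}"
    have Fk: "0 \<le> \<phi> k \<and> \<phi> k \<le> \<tau> k \<and> \<tau> k \<le> T \<and>
        0 \<le> e k \<and> e k \<le> \<zeta> * Pt * h k * (\<Sum>i=0..k-1. \<tau> i) \<and>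
        e k \<le> (Ip / f k) * \<phi> k" using F k by blast
    show "0 \<le> \<phi> k" "0 \<le> e k" "e k \<le> (Ip / f k) * \<phi> k" using Fk by auto
    show "\<phi> k \<le> \<tau>' k" using Fk k a0 unfolding \<tau>'_def by auto
    show "\<tau>' k \<le> T" using Fk k a0 t01 unfolding \<tau>'_def by auto
    show "e k \<le> \<zeta> * Pt * h k * (\<Sum>i=0..k-1. \<tau>' i)"
    proof (cases "k = 1")
      case True then show ?thesis using ea unfolding \<tau>'_def by simp
    next
      case False
      then have "1 \<le> k - 1" using k by auto
      then show ?thesis using ss[of "k-1"] Fk by simp
    qed
  qed
  have "objR K W \<gamma> Bb \<tau> \<phi> e \<le> objR K W \<gamma> Bb \<tau>' \<phi> e"
  proof (rule objR_mono[OF K], intro ballI)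
    fix k assume k: "k \<in> {1..K}"
    show "node_rate W (\<gamma> k) (Bb k) (\<tau> k) (\<phi> k) (e k) \<le> node_rate W (\<gamma> k) (Bb k) (\<tau>' k) (\<phi> k) (e k)"
    proof (cases "k = 1")
      case True then show ?thesis using a0 B unfolding \<tau>'_def by (intro rate_mono_tau) auto
    next
      case False then show ?thesis using k unfolding \<tau>'_def by simp
    qed
  qed
  moreover have "e 1 = \<zeta> * Pt * h 1 * \<tau>' 0" using ea unfolding \<tau>'_def by simp
  ultimately show ?thesis using feas' by blast
qed

lemma trunc_feas:
  "feasibleP K T \<zeta> Pt Ip h f (\<lambda>i. if i \<le> K then \<tau> i else 0) (\<lambda>i. if 1 \<le> i \<and> i \<le> K then \<phi> i else 0)
     (\<lambda>i. if 1 \<le> i \<and> i \<le> K then e i else 0) = feasibleP K T \<zeta> Pt Ip h f \<tau> \<phi> e"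
proof -
  have s: "(\<Sum>i=0..m. (if i \<le> K then \<tau> i else 0)) = (\<Sum>i=0..m. \<tau> i)" if "m \<le> K" for m
    using that by (intro sum.cong) auto
  have s1: "(\<Sum>i=0..K. (if i \<le> K then \<tau> i else 0)) = (\<Sum>i=0..K. \<tau> i)" by (rule s) simp
  have s2: "\<And>k. k \<in> {1..K} \<Longrightarrow> (\<Sum>i=0..k-1. (if i \<le> K then \<tau> i else 0)) = (\<Sum>i=0..k-1. \<tau> i)"
    by (rule s) auto
  show ?thesis unfolding feasibleP_def s1
    by (intro conj_cong refl ball_cong) (auto simp: s)
qed

lemma trunc_obj:
  "objR K W \<gamma> Bb (\<lambda>i. if i \<le> K then \<tau> i else 0) (\<lambda>i. if 1 \<le> i \<and> i \<le> K then \<phi> i else 0)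
     (\<lambda>i. if 1 \<le> i \<and> i \<le> K then e i else 0) = objR K W \<gamma> Bb \<tau> \<phi> e"
  unfolding objR_def by (rule arg_cong[where f=Min], rule image_cong) auto

lemma coord_bounds:
  assumes F: "feasibleP K T \<zeta> Pt Ip h f \<tau> \<phi> e" and T: "T > 0"
  shows "\<bar>if i \<le> K then \<tau> i else 0\<bar> \<le> T + \<bar>\<zeta> * Pt * h i\<bar> * T
    \<and> \<bar>if 1 \<le> i \<and> i \<le> K then \<phi> i else 0\<bar> \<le> T + \<bar>\<zeta> * Pt * h i\<bar> * T
    \<and> \<bar>if 1 \<le> i \<and> i \<le> K then e i else 0\<bar> \<le> T + \<bar>\<zeta> * Pt * h i\<bar> * T"
proof -
  have B0: "0 \<le> \<bar>\<zeta> * Pt * h i\<bar> * T" using T by simp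
  have tb: "0 \<le> \<tau> i \<and> \<tau> i \<le> T" if "i \<le> K"
  proof -
    have "\<tau> i \<le> (\<Sum>j=0..i. \<tau> j)"
      by (rule member_le_sum) (use F that in \<open>auto intro: tau_nonneg\<close>)
    also have "\<dots> \<le> T" using psum_le[OF F that] .
    finally show ?thesis using tau_nonneg[OF F that] by simp
  qed
  have pe: "0 \<le> \<phi> i \<and> \<phi> i \<le> \<tau> i \<and> 0 \<le> e i \<and> e i \<le> \<zeta> * Pt * h i * (\<Sum>j=0..i-1. \<tau> j)"
    if "1 \<le> i" "i \<le> K"
    using F that unfolding feasibleP_def by auto
  have eb: "e i \<le> \<bar>\<zeta> * Pt * h i\<bar> * T" if "1 \<le> i" "i \<le> K"
  proof -
    have S0: "0 \<le> (\<Sum>j=0..i-1. \<tau> j)" using that by (intro sum_nonneg) (auto intro: tau_nonneg[OF F])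
    have ST: "(\<Sum>j=0..i-1. \<tau> j) \<le> T" using that by (intro psum_le[OF F]) auto
    have "e i \<le> \<zeta> * Pt * h i * (\<Sum>j=0..i-1. \<tau> j)" using pe[OF that] by simp
    also have "\<dots> \<le> \<bar>\<zeta> * Pt * h i\<bar> * (\<Sum>j=0..i-1. \<tau> j)" using S0 by (intro mult_right_mono) auto
    also have "\<dots> \<le> \<bar>\<zeta> * Pt * h i\<bar> * T" using ST by (intro mult_left_mono) auto
    finally show ?thesis .
  qed
  show ?thesis
  proof (cases "i \<le> K")
    case False then show ?thesis using B0 T by simp
  next
    case iK: True
    show ?thesis
    proof (cases "1 \<le> i")
      case True
      then show ?thesis using tb[OF iK] pe[OF True iK] eb[OF True iK] B0 iK by auto
    next
      case False
      have "\<bar>\<tau> i\<bar> \<le> T + \<bar>\<zeta> * Pt * h i\<bar> * T" using tb[OF iK] B0 abs_of_nonneg[of "\<tau> i"] by linarith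
      moreover have "\<not> (1 \<le> i \<and> i \<le> K)" using False by simp
      ultimately show ?thesis using B0 T iK by (simp only: if_P if_not_P if_False if_True abs_zero simp_thms)
    qed
  qed
qed

lemma exists_opt:
  fixes K :: nat and T W \<zeta> Pt Ip :: real and h f \<gamma> Bb :: "nat \<Rightarrow> real"
  assumes K: "K \<ge> 1" and T: "T > 0" and W: "W > 0" and z: "0 < \<zeta>"
    and Pt: "Pt > 0" and Ip: "Ip > 0"
    and pos: "\<forall>k\<in>{1..K}. h k > 0 \<and> f k > 0 \<and> \<gamma> k > 0 \<and> Bb k > 0"
  shows "\<exists>\<tau> \<phi> e. feasibleP K T \<zeta> Pt Ip h f \<tau> \<phi> e \<and>
           (\<forall>\<tau>' \<phi>' e'. feasibleP K T \<zeta> Pt Ip h f \<tau>' \<phi>' e' \<longrightarrow>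
               objR K W \<gamma> Bb \<tau>' \<phi>' e' \<le> objR K W \<gamma> Bb \<tau> \<phi> e)"
proof -
  let ?F = "feasibleP K T \<zeta> Pt Ip h f"
  let ?O = "objR K W \<gamma> Bb"
  define V where "V = {?O \<tau> \<phi> e | \<tau> \<phi> e. ?F \<tau> \<phi> e}"
  have K1: "(1::nat) \<in> {1..K}" using K by simp
  have zero: "?F (\<lambda>_. 0) (\<lambda>_. 0) (\<lambda>_. 0)" using T unfolding feasibleP_def by simp
  then have Vne: "V \<noteq> {}" unfolding V_def by blast
  define L where "L = log 2 (1 + Ip / f 1 * \<gamma> 1)"
  have hf: "f 1 > 0" "\<gamma> 1 > 0" "Bb 1 > 0" using pos K1 by auto
  have "0 \<le> Ip / f 1 * \<gamma> 1" by (intro mult_nonneg_nonneg divide_nonneg_pos) (use hf Ip in auto)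
  then have L0: "0 \<le> L" unfolding L_def by simp
  have ub: "?O \<tau> \<phi> e \<le> T * W * L + T * Bb 1" if F: "?F \<tau> \<phi> e" for \<tau> \<phi> e
  proof -
    have F1: "0 \<le> \<phi> 1 \<and> \<phi> 1 \<le> \<tau> 1 \<and> \<tau> 1 \<le> T \<and> 0 \<le> e 1 \<and> e 1 \<le> (Ip / f 1) * \<phi> 1"
      using F K1 unfolding feasibleP_def by blast
    have "?O \<tau> \<phi> e \<le> node_rate W (\<gamma> 1) (Bb 1) (\<tau> 1) (\<phi> 1) (e 1)"
      unfolding objR_def using K1 by (intro Min_le) auto
    also have "\<dots> \<le> \<phi> 1 * W * L + \<tau> 1 * Bb 1"
      unfolding L_def using F1 pos K1 W by (intro rate_bound) auto
    also have "\<dots> \<le> T * W * L + T * Bb 1"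
    proof -
      have "\<phi> 1 * W * L \<le> T * W * L" using F1 W L0 by (intro mult_right_mono) auto
      moreover have "\<tau> 1 * Bb 1 \<le> T * Bb 1" using F1 hf by (intro mult_right_mono) auto
      ultimately show ?thesis by linarith
    qed
    finally show ?thesis .
  qed
  have bdd: "bdd_above V"
  proof (rule bdd_aboveI)
    fix x assume "x \<in> V"
    then obtain \<tau> \<phi> e where "x = ?O \<tau> \<phi> e" "?F \<tau> \<phi> e" unfolding V_def by blast
    then show "x \<le> T * W * L + T * Bb 1" using ub by simp
  qed
  define M where "M = Sup V"
  have "\<forall>n. \<exists>x. ?F (fst x) (fst (snd x)) (snd (snd x)) \<and>
        M - inverse (real (Suc n)) < ?O (fst x) (fst (snd x)) (snd (snd x))"
  proof
    fix n
    have "M - inverse (real (Suc n)) < M" by simp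
    then obtain v where "v \<in> V" "M - inverse (real (Suc n)) < v"
      using less_cSup_iff[OF Vne bdd] unfolding M_def by blast
    then obtain \<tau> \<phi> e where "?F \<tau> \<phi> e" "M - inverse (real (Suc n)) < ?O \<tau> \<phi> e"
      unfolding V_def by blast
    then show "\<exists>x. ?F (fst x) (fst (snd x)) (snd (snd x)) \<and>
        M - inverse (real (Suc n)) < ?O (fst x) (fst (snd x)) (snd (snd x))"
      by (intro exI[of _ "(\<tau>, \<phi>, e)"]) simp
  qed
  from choice[OF this] obtain X where X: "\<forall>n. ?F (fst (X n)) (fst (snd (X n))) (snd (snd (X n))) \<and>
        M - inverse (real (Suc n)) < ?O (fst (X n)) (fst (snd (X n))) (snd (snd (X n)))" by blast
  define ts0 where "ts0 n = (\<lambda>i. if i \<le> K then fst (X n) i else 0)" for n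
  define ps0 where "ps0 n = (\<lambda>i. if 1 \<le> i \<and> i \<le> K then fst (snd (X n)) i else 0)" for n
  define es0 where "es0 n = (\<lambda>i. if 1 \<le> i \<and> i \<le> K then snd (snd (X n)) i else 0)" for n
  have XF: "?F (fst (X n)) (fst (snd (X n))) (snd (snd (X n)))" for n using X by blast
  have XO: "M - inverse (real (Suc n)) < ?O (fst (X n)) (fst (snd (X n))) (snd (snd (X n)))" for n
    using X by blast
  have F0: "?F (ts0 n) (ps0 n) (es0 n)" for n
    unfolding ts0_def ps0_def es0_def by (subst trunc_feas) (rule XF)
  have O0: "M - inverse (real (Suc n)) < ?O (ts0 n) (ps0 n) (es0 n)" for n
    unfolding ts0_def ps0_def es0_def by (subst trunc_obj) (rule XO)
  define g where "g n i = (ts0 n i, ps0 n i, es0 n i)" for n i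
  have bd: "bounded (range (\<lambda>n. g n i))" for i
  proof -
    define B where "B = T + \<bar>\<zeta> * Pt * h i\<bar> * T"
    have "range (\<lambda>n. g n i) \<subseteq> {-B..B} \<times> ({-B..B} \<times> {-B..B})"
    proof
      fix x assume "x \<in> range (\<lambda>n. g n i)"
      then obtain n where x: "x = g n i" by blast
      have "\<bar>ts0 n i\<bar> \<le> B \<and> \<bar>ps0 n i\<bar> \<le> B \<and> \<bar>es0 n i\<bar> \<le> B"
        unfolding ts0_def ps0_def es0_def B_def by (rule coord_bounds[OF XF T])
      then show "x \<in> {-B..B} \<times> ({-B..B} \<times> {-B..B})" unfolding x g_def by auto
    qed
    moreover have "bounded ({-B..B} \<times> ({-B..B} \<times> {-B..B}))"
      by (intro bounded_Times compact_imp_bounded compact_Icc)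
    ultimately show ?thesis by (rule bounded_subset[rotated])
  qed
  obtain r l where r: "strict_mono r" and l: "\<forall>i<Suc K. ((\<lambda>n. g (r n) i) \<longlongrightarrow> l i) sequentially"
    using subseq_multi[of g "Suc K", OF bd] by blast
  define \<tau> where "\<tau> i = fst (l i)" for i
  define \<phi> where "\<phi> i = fst (snd (l i))" for i
  define e where "e i = snd (snd (l i))" for i
  have lt: "\<forall>i\<le>K. (\<lambda>n. ts0 (r n) i) \<longlonglongrightarrow> \<tau> i"
  proof (intro allI impI)
    fix i assume "i \<le> K"
    then have "((\<lambda>n. g (r n) i) \<longlongrightarrow> l i) sequentially" using l by simp
    from tendsto_fst[OF this] show "(\<lambda>n. ts0 (r n) i) \<longlonglongrightarrow> \<tau> i"
      unfolding g_def \<tau>_def by simp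
  qed
  have lp: "\<forall>i\<le>K. (\<lambda>n. ps0 (r n) i) \<longlonglongrightarrow> \<phi> i"
  proof (intro allI impI)
    fix i assume "i \<le> K"
    then have "((\<lambda>n. g (r n) i) \<longlongrightarrow> l i) sequentially" using l by simp
    from tendsto_fst[OF tendsto_snd[OF this]] show "(\<lambda>n. ps0 (r n) i) \<longlonglongrightarrow> \<phi> i"
      unfolding g_def \<phi>_def by simp
  qed
  have le: "\<forall>i\<le>K. (\<lambda>n. es0 (r n) i) \<longlonglongrightarrow> e i"
  proof (intro allI impI)
    fix i assume "i \<le> K"
    then have "((\<lambda>n. g (r n) i) \<longlongrightarrow> l i) sequentially" using l by simp
    from tendsto_snd[OF tendsto_snd[OF this]] show "(\<lambda>n. es0 (r n) i) \<longlonglongrightarrow> e i"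
      unfolding g_def e_def by simp
  qed
  have "\<forall>n. ?F (ts0 (r n)) (ps0 (r n)) (es0 (r n))" using F0 by blast
  from limit_feasible[OF this lt lp le] have Fl: "?F \<tau> \<phi> e" .
  have mlim: "(\<lambda>n. M - inverse (real (Suc n))) \<longlonglongrightarrow> M"
    using tendsto_diff[OF tendsto_const LIMSEQ_inverse_real_of_nat, of M] by simp
  have Om: "M - inverse (real (Suc n)) < ?O (ts0 (r n)) (ps0 (r n)) (es0 (r n))" for n
  proof -
    have "n \<le> r n" using seq_suble[OF r] .
    then have "inverse (real (Suc (r n))) \<le> inverse (real (Suc n))"
      by (intro le_imp_inverse_le) auto
    then show ?thesis using O0[of "r n"] by linarith
  qed
  have "M \<le> ?O \<tau> \<phi> e" unfolding objR_def
  proof (rule Min.boundedI, simp, use K in simp)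
    fix y assume "y \<in> (\<lambda>k. node_rate W (\<gamma> k) (Bb k) (\<tau> k) (\<phi> k) (e k)) ` {1..K}"
    then obtain k where k: "k \<in> {1..K}" and y: "y = node_rate W (\<gamma> k) (Bb k) (\<tau> k) (\<phi> k) (e k)" by auto
    have kK: "k \<le> K" using k by simp
    have Fk: "0 \<le> ps0 (r n) k \<and> 0 \<le> es0 (r n) k \<and> es0 (r n) k \<le> (Ip / f k) * ps0 (r n) k" for n
    proof -
      have "?F (ts0 (r n)) (ps0 (r n)) (es0 (r n))" by (rule F0)
      then have "\<forall>k\<in>{1..K}. 0 \<le> ps0 (r n) k \<and> 0 \<le> es0 (r n) k \<and> es0 (r n) k \<le> (Ip / f k) * ps0 (r n) k"
        unfolding feasibleP_def by auto
      then show ?thesis using k by blast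
    qed
    have mn: "\<forall>n. M - inverse (real (Suc n)) \<le> node_rate W (\<gamma> k) (Bb k) (ts0 (r n) k) (ps0 (r n) k) (es0 (r n) k)"
    proof
      fix n
      have "?O (ts0 (r n)) (ps0 (r n)) (es0 (r n)) \<le> node_rate W (\<gamma> k) (Bb k) (ts0 (r n) k) (ps0 (r n) k) (es0 (r n) k)"
        unfolding objR_def using k by (intro Min_le) auto
      then show "M - inverse (real (Suc n)) \<le> node_rate W (\<gamma> k) (Bb k) (ts0 (r n) k) (ps0 (r n) k) (es0 (r n) k)"
        using Om[of n] by linarith
    qed
    show "M \<le> y" unfolding y
      by (rule rate_usc[where c="Ip / f k"]) (use lt lp le kK Fk W pos k mn mlim in auto)
  qed
  moreover have "?O \<tau>' \<phi>' e' \<le> M" if "?F \<tau>' \<phi>' e'" for \<tau>' \<phi>' e'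
    unfolding M_def using that bdd by (intro cSup_upper) (auto simp: V_def)
  ultimately have "\<forall>\<tau>' \<phi>' e'. ?F \<tau>' \<phi>' e' \<longrightarrow> ?O \<tau>' \<phi>' e' \<le> ?O \<tau> \<phi> e"
    by (meson order_trans)
  then show ?thesis using Fl by blast
qed

theorem lemma3:
  fixes K :: nat and T W \<zeta> Pt Ip :: real and h f \<gamma> Bb :: "nat \<Rightarrow> real"
  assumes "K \<ge> 1" and "T > 0" and "W > 0" and "0 < \<zeta>" and "\<zeta> \<le> 1"
    and "Pt > 0" and "Ip > 0"
    and "\<forall>k\<in>{1..K}. h k > 0 \<and> f k > 0 \<and> \<gamma> k > 0 \<and> Bb k > 0"
  shows "\<exists>\<tau> \<phi> e. feasibleP K T \<zeta> Pt Ip h f \<tau> \<phi> e \<and>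
           (\<forall>\<tau>' \<phi>' e'. feasibleP K T \<zeta> Pt Ip h f \<tau>' \<phi>' e' \<longrightarrow>
               objR K W \<gamma> Bb \<tau>' \<phi>' e' \<le> objR K W \<gamma> Bb \<tau> \<phi> e) \<and>
           e 1 = \<zeta> * Pt * h 1 * \<tau> 0"
proof -
  obtain \<tau> \<phi> e where F: "feasibleP K T \<zeta> Pt Ip h f \<tau> \<phi> e"
    and opt: "\<forall>\<tau>' \<phi>' e'. feasibleP K T \<zeta> Pt Ip h f \<tau>' \<phi>' e' \<longrightarrow>
               objR K W \<gamma> Bb \<tau>' \<phi>' e' \<le> objR K W \<gamma> Bb \<tau> \<phi> e"
    using exists_opt[OF assms(1,2,3,4,6,7,8)] by blast
  have K1: "(1::nat) \<in> {1..K}" using assms(1) by simp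
  have c: "\<zeta> * Pt * h 1 > 0" using assms K1 by simp
  have B: "Bb 1 > 0" using assms K1 by simp
  define \<tau>' where "\<tau>' = \<tau>(0 := e 1 / (\<zeta> * Pt * h 1), 1 := \<tau> 1 + \<tau> 0 - e 1 / (\<zeta> * Pt * h 1))"
  have A: "feasibleP K T \<zeta> Pt Ip h f \<tau>' \<phi> e \<and> objR K W \<gamma> Bb \<tau> \<phi> e \<le> objR K W \<gamma> Bb \<tau>' \<phi> e
         \<and> e 1 = \<zeta> * Pt * h 1 * \<tau>' 0"
    unfolding \<tau>'_def by (rule adjust[where K=K and T=T and \<zeta>=\<zeta> and Pt=Pt and Ip=Ip and h=h and f=f
       and \<tau>=\<tau> and \<phi>=\<phi> and e=e and Bb=Bb and W=W and \<gamma>=\<gamma>, OF F assms(1) c B])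
  show ?thesis using A opt by (intro exI[of _ \<tau>'] exI[of _ \<phi>] exI[of _ e]) (auto intro: order_trans)
qed

end
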